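(* Let $N\ge 2$ and $x_0<x_1<\dots<x_{N-1}<x_N$. Let $\rho$ be an integrable function on $[x_0,x_N]$, let $G(x,s)$ be the Green function of the boundary value problem $\varphi''(x)=-\rho(x)$, $\varphi(x_0)=\varphi(x_N)=0$ on $[x_0,x_N]$, and let $\varphi(x)=\int_{x_0}^{x_N}G(x,s)\rho(s)\,ds$ be the solution of this problem. Define $$\alpha_j^R=\int_{x_{j-1}}^{x_j}G(x_j,s)\rho(s)\,ds\quad (j=1,\dots,N-1),\qquad \alpha_j^L=\int_{x_{j-1}}^{x_j}G(x_{j-1},s)\rho(s)\,ds\quad (j=2,\dots,N).$$ Then for every $i=1,\dots,N-1$, $$\varphi(x_i)=\sum_{j=1}^{i}\alpha_j^R\,\frac{x_i-x_N}{x_j-x_N}+\sum_{j=i+1}^{N}\alpha_j^L\,\frac{x_i-x_0}{x_{j-1}-x_0}.$$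
   Context: The Green function here is $G(x,s)=\frac{(\min(x,s)-x_0)(x_N-\max(x,s))}{x_N-x_0}$, so that $\varphi(x)=\int_{x_0}^{x_N}G(x,s)\rho(s)\,ds$ solves $\varphi''=-\rho$ with $\varphi(x_0)=\varphi(x_N)=0$. *)

theory Defs
  imports "HOL-Analysis.Analysis"
begin

text \<open>Green function of phi'' = -rho, phi(a) = phi(b) = 0 on [a,b].\<close>
definition green :: "real \<Rightarrow> real \<Rightarrow> real \<Rightarrow> real \<Rightarrow> real" where
  "green a b x s = (min x s - a) * (b - max x s) / (b - a)"

definition green_sol :: "real \<Rightarrow> real \<Rightarrow> (real \<Rightarrow> real) \<Rightarrow> real \<Rightarrow> real" where
  "green_sol a b \<rho> x = integral {a..b} (\<lambda>s. green a b x s * \<rho> s)"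

end

theory Submission
  imports Defs
begin

lemma mono_x:
  assumes "\<And>k. k < N \<Longrightarrow> x k < x (Suc k)" "m \<le> n" "n \<le> N"
  shows "x m \<le> (x n :: real)"
  using assms(2,3)
proof (induction n)
  case 0 then show ?case by simp
next
  case (Suc n)
  show ?case
  proof (cases "m = Suc n")
    case False
    then have "x m \<le> x n" using Suc by simp
    also have "x n < x (Suc n)" using assms(1) Suc by simp
    finally show ?thesis by simp
  qed simp
qed

lemma integral_pieces:
  fixes f :: "real \<Rightarrow> real"
  assumes "\<And>k. k < N \<Longrightarrow> x k < x (Suc k)" "f integrable_on {x 0..x N}" "n \<le> N"
  shows "integral {x 0..x n} f = (\<Sum>j=1..n. integral {x (j-1)..x j} f)"
  using assms(3)
proof (induction n)
  case 0 then show ?case by simp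
next
  case (Suc n)
  have le1: "x 0 \<le> x n" using mono_x[where N=N and x=x, OF assms(1)] Suc by simp
  have le2: "x n \<le> x (Suc n)" using assms(1) Suc by (simp add: less_imp_le)
  have le3: "x (Suc n) \<le> x N" using mono_x[where N=N and x=x, OF assms(1)] Suc by simp
  have int: "f integrable_on {x 0..x (Suc n)}"
    using integrable_subinterval_real[OF assms(2)] le3 by auto
  have "integral {x 0..x (Suc n)} f = integral {x 0..x n} f + integral {x n..x (Suc n)} f"
    using Henstock_Kurzweil_Integration.integral_combine[OF le1 le2 int] by simp
  then show ?case using Suc by simp
qed

theorem theorem1:
  fixes N :: nat and x :: "nat \<Rightarrow> real" and \<rho> :: "real \<Rightarrow> real" and i :: nat
  assumes "N \<ge> 2"
    and "\<And>k. k < N \<Longrightarrow> x k < x (Suc k)"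
    and "\<rho> absolutely_integrable_on {x 0..x N}"
    and "1 \<le> i" and "i \<le> N - 1"
  shows "green_sol (x 0) (x N) \<rho> (x i) =
      (\<Sum>j=1..i. integral {x (j - 1)..x j} (\<lambda>s. green (x 0) (x N) (x j) s * \<rho> s)
                  * ((x i - x N) / (x j - x N)))
    + (\<Sum>j=i+1..N. integral {x (j - 1)..x j} (\<lambda>s. green (x 0) (x N) (x (j - 1)) s * \<rho> s)
                  * ((x i - x 0) / (x (j - 1) - x 0)))"
proof -
  let ?a = "x 0" and ?b = "x N"
  let ?g = "\<lambda>s. green ?a ?b (x i) s"
  have ab: "?a < ?b" using mono_x[where N=N and x=x, OF assms(2), of 0 0] assms(2)[of 0] mono_x[where N=N and x=x, OF assms(2), of 1 N] assms(1) by simp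
  have cg: "continuous_on {?a..?b} ?g"
    unfolding green_def by (intro continuous_intros) (use ab in auto)
  have "(\<lambda>s. ?g s * \<rho> s) absolutely_integrable_on {?a..?b}"
  proof (rule absolutely_integrable_bounded_measurable_product_real)
    show "?g \<in> borel_measurable (lebesgue_on {?a..?b})"
      by (rule continuous_imp_measurable_on_sets_lebesgue[OF cg]) auto
    show "bounded (?g ` {?a..?b})"
      by (rule compact_imp_bounded, rule compact_continuous_image[OF cg]) auto
  qed (use assms(3) in auto)
  then have int: "(\<lambda>s. ?g s * \<rho> s) integrable_on {?a..?b}"
    using absolutely_integrable_on_def by blast
  have "green_sol ?a ?b \<rho> (x i) = (\<Sum>j=1..N. integral {x (j-1)..x j} (\<lambda>s. ?g s * \<rho> s))"
    unfolding green_sol_def by (rule integral_pieces[OF assms(2) int]) auto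
  also have "\<dots> = (\<Sum>j=1..i. integral {x (j-1)..x j} (\<lambda>s. ?g s * \<rho> s))
      + (\<Sum>j=i+1..N. integral {x (j-1)..x j} (\<lambda>s. ?g s * \<rho> s))"
    using assms(4,5) sum.ub_add_nat[of 1 i _ "N - i"] by simp
  also have "(\<Sum>j=1..i. integral {x (j-1)..x j} (\<lambda>s. ?g s * \<rho> s))
     = (\<Sum>j=1..i. integral {x (j - 1)..x j} (\<lambda>s. green (x 0) (x N) (x j) s * \<rho> s)
                  * ((x i - x N) / (x j - x N)))"
  proof (rule sum.cong[OF refl])
    fix j assume j: "j \<in> {1..i}"
    have xji: "x j \<le> x i" using mono_x[where N=N and x=x, OF assms(2), of j i] j assms by auto
    have jN: "Suc j \<le> N" "j < N" using j assms(5) assms(1) by auto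
    have xjN: "x j < x N" using mono_x[where N=N and x=x, OF assms(2) jN(1) order_refl] assms(2)[OF jN(2)] by linarith
    have x0j: "x 0 \<le> x (j-1)" using mono_x[where N=N and x=x, OF assms(2), of 0 "j-1"] j assms by auto
    have "integral {x (j-1)..x j} (\<lambda>s. ?g s * \<rho> s)
        = integral {x (j-1)..x j} (\<lambda>s. ((x i - x N) / (x j - x N)) * (green (x 0) (x N) (x j) s * \<rho> s))"
    proof (rule integral_cong)
      fix s assume s: "s \<in> {x (j-1)..x j}"
      then have "s \<le> x j" "s \<le> x i" using xji by auto
      then show "?g s * \<rho> s = ((x i - x N) / (x j - x N)) * (green (x 0) (x N) (x j) s * \<rho> s)"
      proof -
        have e: "min (x i) s = s" "max (x i) s = x i" "min (x j) s = s" "max (x j) s = x j"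
          using \<open>s \<le> x j\<close> \<open>s \<le> x i\<close> by auto
        have n: "x N - x 0 \<noteq> 0" "x j - x N \<noteq> 0" using xjN ab by auto
        have k: "(x i - x N) / (x j - x N) * (x N - x j) = x N - x i" using n by (simp add: field_simps)
        show ?thesis unfolding green_def e k[symmetric] by (simp add: field_simps)
      qed
    qed
    then show "integral {x (j-1)..x j} (\<lambda>s. ?g s * \<rho> s) = integral {x (j - 1)..x j} (\<lambda>s. green (x 0) (x N) (x j) s * \<rho> s)
                  * ((x i - x N) / (x j - x N))" by simp
  qed
  also have "(\<Sum>j=i+1..N. integral {x (j-1)..x j} (\<lambda>s. ?g s * \<rho> s))
     = (\<Sum>j=i+1..N. integral {x (j - 1)..x j} (\<lambda>s. green (x 0) (x N) (x (j - 1)) s * \<rho> s)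
                  * ((x i - x 0) / (x (j - 1) - x 0)))"
  proof (rule sum.cong[OF refl])
    fix j assume j: "j \<in> {i+1..N}"
    have xji: "x i \<le> x (j-1)" using mono_x[where N=N and x=x, OF assms(2), of i "j-1"] j assms by auto
    have jj: "1 \<le> j - 1" "j - 1 \<le> N" "0 < N" using j assms(4,5) assms(1) by auto
    have x0j: "x 0 < x (j-1)" using mono_x[where N=N and x=x, OF assms(2) jj(1,2)] assms(2)[OF jj(3)] by simp
    have "integral {x (j-1)..x j} (\<lambda>s. ?g s * \<rho> s)
        = integral {x (j-1)..x j} (\<lambda>s. ((x i - x 0) / (x (j - 1) - x 0)) * (green (x 0) (x N) (x (j-1)) s * \<rho> s))"
    proof (rule integral_cong)
      fix s assume s: "s \<in> {x (j-1)..x j}"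
      then have "x (j-1) \<le> s" "x i \<le> s" using xji by auto
      then show "?g s * \<rho> s = ((x i - x 0) / (x (j - 1) - x 0)) * (green (x 0) (x N) (x (j-1)) s * \<rho> s)"
      proof -
        have e: "min (x i) s = x i" "max (x i) s = s" "min (x (j-1)) s = x (j-1)" "max (x (j-1)) s = s"
          using \<open>x (j-1) \<le> s\<close> \<open>x i \<le> s\<close> by auto
        have n: "x N - x 0 \<noteq> 0" "x (j-1) - x 0 \<noteq> 0" using x0j ab by auto
        define c where "c = (x i - x 0) / (x (j-1) - x 0)"
        have k: "c * (x (j-1) - x 0) = x i - x 0" using n unfolding c_def by (simp add: field_simps)
        have "c * (green (x 0) (x N) (x (j-1)) s * \<rho> s) = (c * (x (j-1) - x 0)) * (x N - s) / (x N - x 0) * \<rho> s"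
          unfolding green_def e by simp
        then show ?thesis unfolding c_def[symmetric] k green_def e by auto
      qed
    qed
    then show "integral {x (j-1)..x j} (\<lambda>s. ?g s * \<rho> s) = integral {x (j - 1)..x j} (\<lambda>s. green (x 0) (x N) (x (j - 1)) s * \<rho> s)
                  * ((x i - x 0) / (x (j - 1) - x 0))" by simp
  qed
  finally show ?thesis .
qed

end
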